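(* Assume $\rho>\lambda_0(1-\gamma)$. Then the series $\frac{b_0}{\alpha_0}+\sum_{k=1}^\infty\frac{\beta_k}{\lambda_k-g}b_k$ converges in $C(\mathbf S^1)$ (sup-norm), and its sum belongs to $C^2(\mathbf S^1)$.
   Context: $\mathbf S^1\cong[0,2\pi]$ with endpoints identified, Lebesgue measure $d\theta$. $Lx=\sigma x''+Ax$ on $C^2(\mathbf S^1)$ with $\sigma>0$, $A\in C(\mathbf S^1;(0,\infty))$. $\{b_k\}_{k\ge0}$ is an orthonormal basis of $L^2(\mathbf S^1)$ of eigenfunctions of $L$, $Lb_k=\lambda_kb_k$, where $\lambda_0$ is the largest eigenvalue (simple), $b_0>0$, $\lambda_k<\lambda_0$ for $k\ge1$, $\lambda_k\to-\infty$. $\eta\in C(\mathbf S^1;(0,\infty))$, $q\ge0$, $\gamma\in(0,1)\cup(1,\infty)$, $\rho>0$. $\alpha_0=\Big[\frac{\gamma}{\rho-\lambda_0(1-\gamma)}\int_{\mathbf S^1}\eta^{\frac{q+\gamma-1}{\gamma}}b_0^{\frac{\gamma-1}{\gamma}}d\theta\Big]^{\frac{\gamma}{1-\gamma}}$, $\beta=\alpha_0b_0$, $\beta_k=\int_{\mathbf S^1}b_k\,\beta^{-1/\gamma}\eta^{\frac{q+\gamma-1}{\gamma}}d\theta$ for $k\ge1$, $g=\frac{\lambda_0-\rho}{\gamma}$. *)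

theory Defs
  imports "HOL-Analysis.Analysis"
begin

text \<open>The circle S^1 = [0,2pi] with endpoints identified; functions on S^1 are
  represented as 2pi-periodic functions on the real line.\<close>

definition periodic2pi :: "(real \<Rightarrow> real) \<Rightarrow> bool" where
  "periodic2pi f \<longleftrightarrow> (\<forall>x. f (x + 2 * pi) = f x)"

definition C0_circle :: "(real \<Rightarrow> real) \<Rightarrow> bool" where
  "C0_circle f \<longleftrightarrow> periodic2pi f \<and> continuous_on UNIV f"

definition C2_circle :: "(real \<Rightarrow> real) \<Rightarrow> bool" where
  "C2_circle f \<longleftrightarrow> periodic2pi f \<and>
     (\<exists>f' f''. (\<forall>x. (f has_real_derivative f' x) (at x)) \<and>
               (\<forall>x. (f' has_real_derivative f'' x) (at x)) \<and>
               continuous_on UNIV f'')"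

definition circ_int :: "(real \<Rightarrow> real) \<Rightarrow> real" where
  "circ_int f = set_lebesgue_integral lborel {0..2*pi} f"

definition L2_circle :: "(real \<Rightarrow> real) \<Rightarrow> bool" where
  "L2_circle f \<longleftrightarrow> f \<in> borel_measurable lborel \<and>
     set_integrable lborel {0..2*pi} (\<lambda>x. (f x)\<^sup>2)"

definition Lop :: "real \<Rightarrow> (real \<Rightarrow> real) \<Rightarrow> (real \<Rightarrow> real) \<Rightarrow> real \<Rightarrow> real" where
  "Lop \<sigma> A f x = \<sigma> * deriv (deriv f) x + A x * f x"

definition ONB_L2_circle :: "(nat \<Rightarrow> real \<Rightarrow> real) \<Rightarrow> bool" where
  "ONB_L2_circle b \<longleftrightarrow>
     (\<forall>k. L2_circle (b k)) \<and>
     (\<forall>j k. circ_int (\<lambda>x. b j x * b k x) = (if j = k then 1 else 0)) \<and>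
     (\<forall>f. L2_circle f \<longrightarrow>
        ((\<lambda>n. circ_int (\<lambda>x. (f x - (\<Sum>k<n. circ_int (\<lambda>y. f y * b k y) * b k x))\<^sup>2))
           \<longlonglongrightarrow> 0))"

end

theory Submission
  imports Defs "HOL-Library.Periodic_Fun"
begin

lemma periodic_reduce:
  assumes "periodic2pi f"
  shows "\<exists>y\<in>{0..2*pi}. f x = f y"
proof -
  interpret periodic_fun_simple f "2*pi"
    using assms by unfold_locales (simp add: periodic2pi_def)
  define n where "n = floor (x/(2*pi))"
  have 1: "f (x - of_int n * (2*pi)) = f x" by (rule minus_of_int)
  have "of_int n \<le> x/(2*pi)" "x/(2*pi) < of_int n + 1" unfolding n_def by linarith+
  then have "of_int n * (2*pi) \<le> x" "x < (of_int n + 1) * (2*pi)"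
    by (simp_all add: field_simps)
  then have "x - of_int n * (2*pi) \<in> {0..2*pi}" by (auto simp: algebra_simps)
  with 1 show ?thesis by metis
qed

lemma DERIV_integral_at:
  fixes f :: "real \<Rightarrow> real"
  assumes "continuous_on UNIV f" "c < u"
  shows "((\<lambda>x. integral {c..x} f) has_real_derivative f u) (at u)"
proof -
  have "((\<lambda>x. integral {c..x} f) has_real_derivative f u) (at u within {c..u+1})"
    by (rule integral_has_real_derivative) (use assms in \<open>auto intro: continuous_on_subset\<close>)
  then show ?thesis using assms by (simp add: at_within_Icc_at)
qed

lemma periodic_integral_shift:
  fixes f :: "real \<Rightarrow> real"
  assumes cf: "continuous_on UNIV f" and pf: "periodic2pi f"
  shows "integral {a..a+2*pi} f = integral {0..2*pi} f"
proof -
  define c where "c = min a 0 - 1"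
  define d where "d = max a 0 + 1"
  define G where "G t = integral {c..t+2*pi} f - integral {c..t} f" for t
  have dG: "DERIV G t :> 0" if "t \<in> {c<..<d}" for t
  proof -
    have t: "c < t" using that by auto
    have "((\<lambda>x. integral {c..x} f) has_real_derivative f (t + 2*pi)) (at (t + 2*pi))"
      using t pi_gt_zero by (intro DERIV_integral_at cf) linarith
    then have "((\<lambda>x. integral {c..x + 2*pi} f) has_real_derivative f (t + 2*pi)) (at t)"
      by (subst (asm) DERIV_shift) simp
    moreover have "((\<lambda>x. integral {c..x} f) has_real_derivative f t) (at t)"
      using t by (intro DERIV_integral_at cf)
    ultimately have "DERIV G t :> f (t+2*pi) - f t"
      unfolding G_def by (rule DERIV_diff)
    moreover have "f (t+2*pi) = f t" using pf by (simp add: periodic2pi_def)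
    ultimately show ?thesis by simp
  qed
  have "G a = G 0"
    by (rule DERIV_isconst3[of c d]) (use dG in \<open>auto simp: c_def d_def\<close>)
  moreover have "G t = integral {t..t+2*pi} f" if "c \<le> t" for t
  proof -
    have fi: "f integrable_on {c..t+2*pi}"
      by (rule integrable_continuous_interval) (rule continuous_on_subset[OF cf], auto)
    have "integral {c..t} f + integral {t..t+2*pi} f = integral {c..t+2*pi} f"
      by (rule Henstock_Kurzweil_Integration.integral_combine[OF that _ fi]) (use pi_gt_zero in simp)
    then show ?thesis unfolding G_def by simp
  qed
  ultimately show ?thesis by (simp add: c_def)
qed

lemma L1_L2:
  fixes f :: "real \<Rightarrow> real"
  assumes cf: "continuous_on {0..2*pi} f"
  shows "integral {0..2*pi} (\<lambda>x. \<bar>f x\<bar>) \<le> sqrt (2*pi * integral {0..2*pi} (\<lambda>x. (f x)^2))"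
proof -
  define J where "J = integral {0..2*pi} (\<lambda>x. \<bar>f x\<bar>)"
  define Q where "Q = integral {0..2*pi} (\<lambda>x. (f x)^2)"
  define s where "s = J / (2*pi)"
  have ca: "continuous_on {0..2*pi} (\<lambda>x. \<bar>f x\<bar>)" using cf by (intro continuous_intros)
  have cq: "continuous_on {0..2*pi} (\<lambda>x. (f x)^2)" using cf by (intro continuous_intros)
  have "0 \<le> integral {0..2*pi} (\<lambda>x. (\<bar>f x\<bar> - s)^2)"
    by (rule integral_nonneg) (auto intro!: integrable_continuous_interval continuous_intros cf)
  also have "(\<lambda>x. (\<bar>f x\<bar> - s)^2) = (\<lambda>x. ((f x)^2 - 2 * s * abs (f x)) + s^2)"
    by (auto simp: power2_eq_square algebra_simps)
  also have "integral {0..2*pi} \<dots> = Q - 2 * s * J + 2 * pi * s^2"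
  proof (rule integral_unique)
    have "((\<lambda>x. ((f x)^2 - 2 * s * abs (f x)) + s^2) has_integral
       ((Q - 2 * s * J) + measure lborel {0..2*pi} *\<^sub>R s^2)) {0..2*pi}"
      unfolding Q_def J_def
      by (intro has_integral_add has_integral_diff has_integral_mult_right has_integral_const_real
          integrable_integral integrable_continuous_interval ca cq)
    then show "((\<lambda>x. ((f x)^2 - 2 * s * abs (f x)) + s^2) has_integral
       (Q - 2 * s * J + 2 * pi * s^2)) {0..2*pi}" using pi_gt_zero by simp
  qed
  finally have "0 \<le> Q - 2 * s * J + 2 * pi * s^2" .
  then have "J^2 \<le> 2*pi*Q" unfolding s_def using pi_gt_zero
    by (simp add: field_simps power2_eq_square)
  then have "sqrt (J^2) \<le> sqrt (2*pi*Q)" by (rule real_sqrt_le_mono)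
  then show ?thesis unfolding J_def[symmetric] Q_def[symmetric] by simp
qed

lemma diff_le_L1:
  fixes f f' :: "real \<Rightarrow> real"
  assumes d: "\<And>x. (f has_real_derivative f' x) (at x)" and c: "continuous_on UNIV f'"
    and x: "x \<in> {0..2*pi}" and y: "y \<in> {0..2*pi}"
  shows "\<bar>f x - f y\<bar> \<le> integral {0..2*pi} (\<lambda>t. \<bar>f' t\<bar>)"
proof -
  have key: "\<bar>f v - f u\<bar> \<le> integral {0..2*pi} (\<lambda>t. \<bar>f' t\<bar>)"
    if uv: "0 \<le> u" "u \<le> v" "v \<le> 2*pi" for u v
  proof -
    have "(f' has_integral (f v - f u)) {u..v}"
      by (rule fundamental_theorem_of_calculus[OF \<open>u \<le> v\<close>])
        (use d in \<open>auto simp: has_real_derivative_iff_has_vector_derivative[symmetric]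
            intro: has_field_derivative_at_within\<close>)
    then have e: "integral {u..v} f' = f v - f u" by (rule integral_unique)
    have ci: "continuous_on {a..b} g" if "continuous_on UNIV g" for a b and g :: "real \<Rightarrow> real"
      using that by (rule continuous_on_subset) auto
    have ca: "continuous_on UNIV (\<lambda>t. \<bar>f' t\<bar>)" using c by (intro continuous_intros)
    have "norm (integral {u..v} f') \<le> integral {u..v} (\<lambda>t. \<bar>f' t\<bar>)"
      by (rule integral_norm_bound_integral)
        (auto intro!: integrable_continuous_interval ci c ca)
    also have "\<dots> \<le> integral {0..2*pi} (\<lambda>t. \<bar>f' t\<bar>)"
      by (rule integral_subset_le) (use uv in \<open>auto intro!: integrable_continuous_interval ci ca\<close>)
    finally show ?thesis using e by simp
  qed
  show ?thesis
  proof (cases "y \<le> x")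
    case True then show ?thesis using key[of y x] x y by auto
  next
    case False then show ?thesis using key[of x y] x y by auto
  qed
qed

lemma deriv_periodic:
  assumes p: "periodic2pi f" and d: "\<And>x. (f has_real_derivative f' x) (at x)"
  shows "periodic2pi f'"
  unfolding periodic2pi_def
proof
  fix x
  have "((\<lambda>t. f (t + 2*pi)) has_real_derivative f' (x + 2*pi)) (at x)"
    using d[of "x + 2*pi"] by (subst (asm) DERIV_shift) simp
  moreover have "(\<lambda>t. f (t + 2*pi)) = f" using p by (auto simp: periodic2pi_def)
  ultimately have "(f has_real_derivative f' (x + 2*pi)) (at x)" by simp
  then show "f' (x + 2*pi) = f' x" using d[of x] by (rule DERIV_unique)
qed

lemma sup_bound:
  fixes w w1 w2 :: "real \<Rightarrow> real"
  assumes pw: "periodic2pi w"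
    and dw: "\<And>x. (w has_real_derivative w1 x) (at x)"
    and dw1: "\<And>x. (w1 has_real_derivative w2 x) (at x)"
    and cw2: "continuous_on UNIV w2"
  shows "\<bar>w1 x\<bar> \<le> sqrt (2*pi * integral {0..2*pi} (\<lambda>t. (w2 t)^2))"
    and "\<bar>w x\<bar> \<le> sqrt (integral {0..2*pi} (\<lambda>t. (w t)^2) / (2*pi))
            + 2*pi * sqrt (2*pi * integral {0..2*pi} (\<lambda>t. (w2 t)^2))"
proof -
  define B1 where "B1 = sqrt (2*pi * integral {0..2*pi} (\<lambda>t. (w2 t)^2))"
  have pw1: "periodic2pi w1" using pw dw by (rule deriv_periodic)
  have cw: "continuous_on UNIV w" using dw
    by (metis DERIV_isCont continuous_at_imp_continuous_on)
  have cw1: "continuous_on UNIV w1" using dw1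
    by (metis DERIV_isCont continuous_at_imp_continuous_on)
  obtain z where z: "0 < z" "z < 2*pi" "w (2*pi) - w 0 = (2*pi - 0) * w1 z"
    using MVT2[of 0 "2*pi" w w1] dw pi_gt_zero by auto
  have "w (2*pi) = w 0" using pw unfolding periodic2pi_def by (metis add_0)
  with z have wz: "w1 z = 0" by simp
  have b1I: "\<bar>w1 x\<bar> \<le> B1" if "x \<in> {0..2*pi}" for x
  proof -
    have "\<bar>w1 x - w1 z\<bar> \<le> integral {0..2*pi} (\<lambda>t. \<bar>w2 t\<bar>)"
      by (rule diff_le_L1[OF dw1 cw2 that]) (use z in auto)
    also have "\<dots> \<le> B1" unfolding B1_def
      by (rule L1_L2) (rule continuous_on_subset[OF cw2], auto)
    finally show ?thesis using wz by simp
  qed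
  have b1: "\<bar>w1 x\<bar> \<le> B1" for x
    using periodic_reduce[OF pw1, of x] b1I by auto
  then show "\<bar>w1 x\<bar> \<le> sqrt (2*pi * integral {0..2*pi} (\<lambda>t. (w2 t)^2))"
    unfolding B1_def .
  have cw2': "continuous_on {0..2*pi} (\<lambda>t. (w t)^2)"
    by (intro continuous_intros continuous_on_subset[OF cw]) auto
  obtain y where y: "y \<in> {0..2*pi}" "\<And>t. t \<in> {0..2*pi} \<Longrightarrow> (w y)^2 \<le> (w t)^2"
    using continuous_attains_inf[OF compact_Icc _ cw2'] pi_gt_zero by auto
  have "integral {0..2*pi} (\<lambda>t. (w y)^2) \<le> integral {0..2*pi} (\<lambda>t. (w t)^2)"
    by (rule integral_le) (use y in \<open>auto intro!: integrable_continuous_interval cw2'\<close>)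
  then have "2*pi * (w y)^2 \<le> integral {0..2*pi} (\<lambda>t. (w t)^2)" using pi_gt_zero by simp
  then have "(w y)^2 \<le> integral {0..2*pi} (\<lambda>t. (w t)^2) / (2*pi)" using pi_gt_zero
    by (simp add: field_simps)
  then have wy: "\<bar>w y\<bar> \<le> sqrt (integral {0..2*pi} (\<lambda>t. (w t)^2) / (2*pi))"
    using real_sqrt_le_mono by fastforce
  have bI: "\<bar>w x\<bar> \<le> sqrt (integral {0..2*pi} (\<lambda>t. (w t)^2) / (2*pi)) + 2*pi * B1"
    if x: "x \<in> {0..2*pi}" for x
  proof -
    have "\<bar>w x - w y\<bar> \<le> integral {0..2*pi} (\<lambda>t. \<bar>w1 t\<bar>)"
      by (rule diff_le_L1[OF dw cw1 x y(1)])
    also have "\<dots> \<le> integral {0..2*pi} (\<lambda>t. B1)"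
      by (rule integral_le) (use b1 in \<open>auto intro!: integrable_continuous_interval
           continuous_intros continuous_on_subset[OF cw1]\<close>)
    also have "\<dots> = 2*pi * B1" using pi_gt_zero by simp
    finally show ?thesis using wy by linarith
  qed
  show "\<bar>w x\<bar> \<le> sqrt (integral {0..2*pi} (\<lambda>t. (w t)^2) / (2*pi))
            + 2*pi * sqrt (2*pi * integral {0..2*pi} (\<lambda>t. (w2 t)^2))"
    using periodic_reduce[OF pw, of x] bI unfolding B1_def by auto
qed


lemma contint: "continuous_on UNIV f \<Longrightarrow> (f::real\<Rightarrow>real) integrable_on {a..b}"
  by (rule integrable_continuous_interval) (rule continuous_on_subset, auto)

locale eig =
  fixes \<sigma> :: real and A :: "real \<Rightarrow> real" and b b1 :: "nat \<Rightarrow> real \<Rightarrow> real" and lam :: "nat \<Rightarrow> real"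
  assumes sig: "\<sigma> > 0"
    and cA: "continuous_on UNIV A" and pA: "periodic2pi A"
    and pb: "\<And>k. periodic2pi (b k)"
    and db: "\<And>k x. (b k has_real_derivative b1 k x) (at x)"
    and db1: "\<And>k x. (b1 k has_real_derivative (lam k - A x) * b k x / \<sigma>) (at x)"
    and orth: "\<And>j k. integral {0..2*pi} (\<lambda>x. b j x * b k x) = (if j = k then 1 else 0)"
    and compl: "\<And>f. continuous_on UNIV f \<Longrightarrow>
        (\<lambda>n. integral {0..2*pi} (\<lambda>x. (f x - (\<Sum>k<n. integral {0..2*pi} (\<lambda>y. f y * b k y) * b k x))^2))
          \<longlonglongrightarrow> 0"
    and lbot: "filterlim lam at_bot sequentially"
begin

lemma cb [continuous_intros]: "continuous_on UNIV (b k)"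
  using db by (metis DERIV_isCont continuous_at_imp_continuous_on)

lemma cb1 [continuous_intros]: "continuous_on UNIV (b1 k)"
  using db1 by (metis DERIV_isCont continuous_at_imp_continuous_on)

lemma cb' [continuous_intros]: "continuous_on S (b k)"
  using cb continuous_on_subset by blast

lemma cA' [continuous_intros]: "continuous_on S A"
  using cA continuous_on_subset by blast

lemma ip_sum_sum:
  assumes F: "finite F"
  shows "integral {0..2*pi} (\<lambda>x. (\<Sum>k\<in>F. c k * b k x) * (\<Sum>j\<in>F. d j * b j x)) = (\<Sum>k\<in>F. c k * d k)"
proof -
  have "(\<lambda>x. (\<Sum>k\<in>F. c k * b k x) * (\<Sum>j\<in>F. d j * b j x)) =
        (\<lambda>x. \<Sum>k\<in>F. \<Sum>j\<in>F. (c k * d j) * (b k x * b j x))"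
    by (auto simp: sum_product algebra_simps)
  then have "integral {0..2*pi} (\<lambda>x. (\<Sum>k\<in>F. c k * b k x) * (\<Sum>j\<in>F. d j * b j x)) =
     (\<Sum>k\<in>F. \<Sum>j\<in>F. integral {0..2*pi} (\<lambda>x. (c k * d j) * (b k x * b j x)))"
    using F by (simp add: integral_sum contint continuous_intros integrable_sum)
  also have "\<dots> = (\<Sum>k\<in>F. \<Sum>j\<in>F. (if k = j then c k * d j else 0))"
    by (intro sum.cong refl) (simp add: orth)
  also have "\<dots> = (\<Sum>k\<in>F. c k * d k)"
    using F by (simp add: sum.delta)
  finally show ?thesis .
qed

lemma ip_f_sum:
  assumes F: "finite F" and cf: "continuous_on UNIV f"
  shows "integral {0..2*pi} (\<lambda>x. f x * (\<Sum>k\<in>F. c k * b k x))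
       = (\<Sum>k\<in>F. c k * integral {0..2*pi} (\<lambda>y. f y * b k y))"
proof -
  have "(\<lambda>x. f x * (\<Sum>k\<in>F. c k * b k x)) = (\<lambda>x. \<Sum>k\<in>F. c k * (f x * b k x))"
    by (auto simp: sum_distrib_left algebra_simps)
  then show ?thesis
    using F cf by (simp add: integral_sum contint continuous_intros)
qed


context
  fixes h :: "real \<Rightarrow> real" and g :: real
  assumes ch: "continuous_on UNIV h" and ph: "periodic2pi h"
begin

lemma ch' [continuous_intros]: "continuous_on S h"
  using ch continuous_on_subset by blast

definition "beta k = integral {0..2*pi} (\<lambda>y. h y * b k y)"

lemma beta_eq: "beta k = integral {0..2*pi} (\<lambda>y. h y * b k y)"
  by (simp add: beta_def)

lemma resid:
  assumes F: "finite F"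
  shows "integral {0..2*pi} (\<lambda>x. (h x - (\<Sum>k\<in>F. beta k * b k x))^2)
       = integral {0..2*pi} (\<lambda>x. (h x)^2) - (\<Sum>k\<in>F. (beta k)^2)"
proof -
  let ?P = "\<lambda>x. \<Sum>k\<in>F. beta k * b k x"
  have e: "(\<lambda>x. (h x - ?P x)^2) = (\<lambda>x. ((h x)^2 - 2 * (h x * ?P x)) + ?P x * ?P x)"
    by (auto simp: power2_eq_square algebra_simps)
  have i1: "integral {0..2*pi} (\<lambda>x. h x * ?P x) = (\<Sum>k\<in>F. (beta k)^2)"
    using ip_f_sum[OF F ch, of beta] by (simp add: beta_def[symmetric] power2_eq_square)
  have i2: "integral {0..2*pi} (\<lambda>x. ?P x * ?P x) = (\<Sum>k\<in>F. (beta k)^2)"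
    using ip_sum_sum[OF F, of beta beta] by (simp add: power2_eq_square)
  have "integral {0..2*pi} (\<lambda>x. ((h x)^2 - 2 * (h x * ?P x)) + ?P x * ?P x)
     = (integral {0..2*pi} (\<lambda>x. (h x)^2) - 2 * integral {0..2*pi} (\<lambda>x. h x * ?P x))
        + integral {0..2*pi} (\<lambda>x. ?P x * ?P x)"
    by (subst integral_add, (intro contint continuous_intros)+,
        subst integral_diff, (intro contint continuous_intros)+) simp
  then show ?thesis unfolding e i1 i2 by simp
qed

lemma beta_summable: "summable (\<lambda>k. (beta k)^2)"
proof (rule summableI_nonneg_bounded)
  fix n
  have "0 \<le> integral {0..2*pi} (\<lambda>x. (h x - (\<Sum>k\<in>{..<n}. beta k * b k x))^2)"
    by (rule integral_nonneg) (auto intro!: contint continuous_intros)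
  then show "sum (\<lambda>k. (beta k)^2) {..<n} \<le> integral {0..2*pi} (\<lambda>x. (h x)^2)"
    using resid[of "{..<n}"] by simp
qed simp

lemma K_ex: "\<exists>K\<ge>1. \<forall>k\<ge>K. lam k \<le> g - 1"
proof -
  have "eventually (\<lambda>k. lam k \<le> g - 1) sequentially"
    using lbot by (simp add: filterlim_at_bot)
  then obtain N where "\<forall>k\<ge>N. lam k \<le> g - 1" by (auto simp: eventually_sequentially)
  then show ?thesis by (intro exI[of _ "max N 1"]) auto
qed

definition "KK = (SOME K. K \<ge> 1 \<and> (\<forall>k\<ge>K. lam k \<le> g - 1))"

lemma KK: "KK \<ge> 1" "\<And>k. k \<ge> KK \<Longrightarrow> lam k \<le> g - 1"
  using someI_ex[OF K_ex] unfolding KK_def by auto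

definition "cc k = beta k / (lam k - g)"

lemma cc_le: "k \<ge> KK \<Longrightarrow> \<bar>cc k\<bar> \<le> \<bar>beta k\<bar>"
proof -
  assume k: "k \<ge> KK"
  then have l: "\<bar>lam k - g\<bar> \<ge> 1" using KK(2)[OF k] by simp
  have "\<bar>cc k\<bar> = \<bar>beta k\<bar> / \<bar>lam k - g\<bar>" by (simp add: cc_def abs_divide)
  also have "\<dots> \<le> \<bar>beta k\<bar>" using l by (simp add: divide_le_eq mult_le_cancel_left1)
  finally show ?thesis .
qed

lemma cc_lam: "k \<ge> KK \<Longrightarrow> cc k * lam k = beta k + g * cc k"
proof -
  assume k: "k \<ge> KK"
  then have "lam k - g \<noteq> 0" using KK(2)[OF k] by simp
  then show ?thesis by (simp add: cc_def field_simps)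
qed

lemma M_ex: "\<exists>M>0. \<forall>x. \<bar>g - A x\<bar> \<le> M"
proof -
  have c: "continuous_on {0..2*pi} (\<lambda>x. \<bar>g - A x\<bar>)" by (intro continuous_intros)
  obtain y where y: "y \<in> {0..2*pi}" "\<And>t. t \<in> {0..2*pi} \<Longrightarrow> \<bar>g - A t\<bar> \<le> \<bar>g - A y\<bar>"
    using continuous_attains_sup[OF compact_Icc _ c] pi_gt_zero by auto
  have "\<bar>g - A x\<bar> \<le> \<bar>g - A y\<bar> + 1" for x
  proof -
    have p: "periodic2pi (\<lambda>x. \<bar>g - A x\<bar>)" using pA by (simp add: periodic2pi_def)
    from periodic_reduce[OF p, of x] y show ?thesis by force
  qed
  then show ?thesis by (intro exI[of _ "\<bar>g - A y\<bar> + 1"]) auto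
qed

definition "MM = (SOME M. M > 0 \<and> (\<forall>x. \<bar>g - A x\<bar> \<le> M))"

lemma MM: "MM > 0" "\<And>x. \<bar>g - A x\<bar> \<le> MM"
  using someI_ex[OF M_ex] unfolding MM_def by auto

definition "C0 = 2 * (1 + MM^2) / \<sigma>^2"
definition "Cst = sqrt (1/(2*pi)) + (2*pi + 1) * sqrt (2*pi*C0)"

lemma C0_pos: "C0 > 0" unfolding C0_def using sig by (simp add: add_pos_nonneg)

lemma Cst_pos: "Cst > 0" unfolding Cst_def using C0_pos pi_gt_zero
  by (intro add_pos_nonneg) auto

lemma est:
  assumes F: "finite F" and FK: "\<And>k. k \<in> F \<Longrightarrow> k \<ge> KK"
  shows "\<bar>\<Sum>k\<in>F. cc k * b k x\<bar> \<le> Cst * sqrt (\<Sum>k\<in>F. (beta k)^2)"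
    and "\<bar>\<Sum>k\<in>F. cc k * b1 k x\<bar> \<le> Cst * sqrt (\<Sum>k\<in>F. (beta k)^2)"
proof -
  define E where "E = (\<Sum>k\<in>F. (beta k)^2)"
  define w where "w x = (\<Sum>k\<in>F. cc k * b k x)" for x
  define w1 where "w1 x = (\<Sum>k\<in>F. cc k * b1 k x)" for x
  define Q where "Q x = (\<Sum>k\<in>F. beta k * b k x)" for x
  define w2 where "w2 x = (Q x + (g - A x) * w x) / \<sigma>" for x
  have E0: "E \<ge> 0" unfolding E_def by (intro sum_nonneg) auto
  have dw: "(w has_real_derivative w1 x) (at x)" for x
    unfolding w_def w1_def by (auto intro!: derivative_eq_intros db simp: mult.commute)
  have w2_eq: "w2 = (\<lambda>x. \<Sum>k\<in>F. cc k * ((lam k - A x) * b k x / \<sigma>))"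
  proof
    fix x
    have "(\<Sum>k\<in>F. cc k * ((lam k - A x) * b k x / \<sigma>))
        = (\<Sum>k\<in>F. (beta k * b k x + (g - A x) * (cc k * b k x)) / \<sigma>)"
    proof (rule sum.cong[OF refl])
      fix k assume "k \<in> F"
      then have e: "cc k * lam k = beta k + g * cc k" using cc_lam FK by blast
      have "cc k * ((lam k - A x) * b k x / \<sigma>) = ((cc k * lam k) * b k x - A x * (cc k * b k x)) / \<sigma>"
        by (simp add: algebra_simps)
      also have "\<dots> = (beta k * b k x + (g - A x) * (cc k * b k x)) / \<sigma>"
        unfolding e by (simp add: algebra_simps)
      finally show "cc k * ((lam k - A x) * b k x / \<sigma>) = (beta k * b k x + (g - A x) * (cc k * b k x)) / \<sigma>" .
    qed
    also have "\<dots> = (Q x + (g - A x) * w x) / \<sigma>" unfolding Q_def w_def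
      by (simp add: sum_divide_distrib[symmetric] sum.distrib sum_distrib_left)
    finally show "w2 x = (\<Sum>k\<in>F. cc k * ((lam k - A x) * b k x / \<sigma>))" unfolding w2_def by simp
  qed
  have dw1: "(w1 has_real_derivative w2 x) (at x)" for x
    unfolding w1_def w2_eq by (auto intro!: derivative_eq_intros db1 simp: mult.commute)
  have cw: "continuous_on UNIV w" using dw
    by (metis DERIV_isCont continuous_at_imp_continuous_on)
  have cQ: "continuous_on UNIV Q" unfolding Q_def by (intro continuous_intros)
  have cw2: "continuous_on UNIV w2" unfolding w2_def
    by (intro continuous_intros cQ cw) (use sig in auto)
  have pw: "periodic2pi w" using pb unfolding w_def periodic2pi_def by simp
  have iw: "integral {0..2*pi} (\<lambda>x. (w x)^2) \<le> E"
  proof -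
    have "integral {0..2*pi} (\<lambda>x. (w x)^2) = (\<Sum>k\<in>F. cc k * cc k)"
      using ip_sum_sum[OF F, of cc cc] unfolding w_def by (simp add: power2_eq_square)
    also have "\<dots> \<le> E" unfolding E_def
    proof (rule sum_mono)
      fix k assume "k \<in> F"
      then have "\<bar>cc k\<bar>^2 \<le> \<bar>beta k\<bar>^2" using cc_le FK by (intro power_mono) auto
      then show "cc k * cc k \<le> (beta k)^2" by (simp add: power2_eq_square)
    qed
    finally show ?thesis .
  qed
  have iQ: "integral {0..2*pi} (\<lambda>x. (Q x)^2) = E"
    using ip_sum_sum[OF F, of beta beta] unfolding Q_def E_def by (simp add: power2_eq_square)
  have pt: "(w2 x)^2 \<le> (2 * (Q x)^2 + 2 * MM^2 * (w x)^2) / \<sigma>^2" for x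
  proof -
    have "\<bar>g - A x\<bar>^2 \<le> MM^2" using MM by (intro power_mono) auto
    then have "(g - A x)^2 * (w x)^2 \<le> MM^2 * (w x)^2" by (intro mult_right_mono) auto
    then have q: "((g - A x) * w x)^2 \<le> MM^2 * (w x)^2" by (simp add: power_mult_distrib)
    have "0 \<le> (Q x - (g - A x) * w x)^2" by simp
    then have "(Q x + (g - A x) * w x)^2 \<le> 2 * (Q x)^2 + 2 * ((g - A x) * w x)^2"
      by (simp add: power2_eq_square algebra_simps)
    with q have "(Q x + (g - A x) * w x)^2 \<le> 2 * (Q x)^2 + 2 * MM^2 * (w x)^2" by linarith
    then show ?thesis using sig by (simp add: w2_def power_divide divide_right_mono)
  qed
  have iw2: "integral {0..2*pi} (\<lambda>x. (w2 x)^2) \<le> C0 * E"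
  proof -
    have "integral {0..2*pi} (\<lambda>x. (w2 x)^2) \<le> integral {0..2*pi} (\<lambda>x. (2 * (Q x)^2 + 2 * MM^2 * (w x)^2) / \<sigma>^2)"
      by (rule integral_le) (use sig pt in \<open>auto intro!: contint continuous_intros cw2 cQ cw\<close>)
    also have "\<dots> = (2 * integral {0..2*pi} (\<lambda>x. (Q x)^2) + 2 * MM^2 * integral {0..2*pi} (\<lambda>x. (w x)^2)) / \<sigma>^2"
      by (simp add: integral_add contint continuous_intros cQ cw)
    also have "\<dots> \<le> (2 * E + 2 * MM^2 * E) / \<sigma>^2"
      using iQ iw by (intro divide_right_mono add_mono mult_left_mono) auto
    also have "\<dots> = C0 * E" unfolding C0_def by (simp add: field_simps)
    finally show ?thesis .
  qed
  have b1: "\<bar>w1 x\<bar> \<le> sqrt (2*pi*C0) * sqrt E" for x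
  proof -
    have "\<bar>w1 x\<bar> \<le> sqrt (2*pi * integral {0..2*pi} (\<lambda>t. (w2 t)^2))"
      by (rule sup_bound(1)[OF pw dw dw1 cw2])
    also have "\<dots> \<le> sqrt (2*pi * (C0 * E))" using iw2 by (intro real_sqrt_le_mono) auto
    finally show ?thesis by (simp add: real_sqrt_mult mult.assoc)
  qed
  have b0: "\<bar>w x\<bar> \<le> (sqrt (1/(2*pi)) + 2*pi * sqrt (2*pi*C0)) * sqrt E" for x
  proof -
    have "\<bar>w x\<bar> \<le> sqrt (integral {0..2*pi} (\<lambda>t. (w t)^2) / (2*pi))
            + 2*pi * sqrt (2*pi * integral {0..2*pi} (\<lambda>t. (w2 t)^2))"
      by (rule sup_bound(2)[OF pw dw dw1 cw2])
    also have "\<dots> \<le> sqrt (E / (2*pi)) + 2*pi * sqrt (2*pi * (C0 * E))"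
      using iw2 iw by (intro add_mono mult_left_mono real_sqrt_le_mono divide_right_mono) auto
    also have "\<dots> = (sqrt (1/(2*pi)) + 2*pi * sqrt (2*pi*C0)) * sqrt E"
      by (simp add: real_sqrt_mult real_sqrt_divide algebra_simps)
    finally show ?thesis .
  qed
  have sE: "sqrt E \<ge> 0" using E0 by simp
  have "sqrt (1/(2*pi)) + 2*pi * sqrt (2*pi*C0) \<le> Cst"
       "sqrt (2*pi*C0) \<le> Cst"
    unfolding Cst_def using C0_pos pi_gt_zero by (auto simp: algebra_simps)
  then have "(sqrt (1/(2*pi)) + 2*pi * sqrt (2*pi*C0)) * sqrt E \<le> Cst * sqrt E"
            "sqrt (2*pi*C0) * sqrt E \<le> Cst * sqrt E"
    using sE by (auto intro: mult_right_mono)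
  then show "\<bar>\<Sum>k\<in>F. cc k * b k x\<bar> \<le> Cst * sqrt (\<Sum>k\<in>F. (beta k)^2)"
    and "\<bar>\<Sum>k\<in>F. cc k * b1 k x\<bar> \<le> Cst * sqrt (\<Sum>k\<in>F. (beta k)^2)"
    using b0[of x] b1[of x] unfolding w_def w1_def E_def by linarith+
qed

lemma lam_sum:
  assumes FK: "\<And>k. k \<in> F \<Longrightarrow> k \<ge> KK"
  shows "(\<Sum>k\<in>F. cc k * ((lam k - A x) * b k x / \<sigma>))
     = ((\<Sum>k\<in>F. beta k * b k x) + (g - A x) * (\<Sum>k\<in>F. cc k * b k x)) / \<sigma>"
proof -
  have "(\<Sum>k\<in>F. cc k * ((lam k - A x) * b k x / \<sigma>))
      = (\<Sum>k\<in>F. (beta k * b k x + (g - A x) * (cc k * b k x)) / \<sigma>)"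
  proof (rule sum.cong[OF refl])
    fix k assume "k \<in> F"
    then have e: "cc k * lam k = beta k + g * cc k" using cc_lam FK by blast
    have "cc k * ((lam k - A x) * b k x / \<sigma>) = ((cc k * lam k) * b k x - A x * (cc k * b k x)) / \<sigma>"
      by (simp add: algebra_simps)
    also have "\<dots> = (beta k * b k x + (g - A x) * (cc k * b k x)) / \<sigma>"
      unfolding e by (simp add: algebra_simps)
    finally show "cc k * ((lam k - A x) * b k x / \<sigma>) = (beta k * b k x + (g - A x) * (cc k * b k x)) / \<sigma>" .
  qed
  also have "\<dots> = ((\<Sum>k\<in>F. beta k * b k x) + (g - A x) * (\<Sum>k\<in>F. cc k * b k x)) / \<sigma>"
    by (simp add: sum_divide_distrib[symmetric] sum.distrib sum_distrib_left)
  finally show ?thesis .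
qed

lemma small: "e > 0 \<Longrightarrow> \<exists>N\<ge>KK. \<forall>m\<ge>N. \<forall>n. Cst * sqrt (\<Sum>k\<in>{m..<n}. (beta k)^2) < e"
proof -
  assume e: "e > 0"
  define d where "d = (e / Cst)^2"
  have d: "d > 0" unfolding d_def using e Cst_pos by simp
  obtain N where N: "\<forall>m\<ge>N. \<forall>n. norm (\<Sum>k\<in>{m..<n}. (beta k)^2) < d"
    using beta_summable d unfolding summable_Cauchy by blast
  have "Cst * sqrt (\<Sum>k\<in>{m..<n}. (beta k)^2) < e" if m: "m \<ge> max N KK" for m n
  proof -
    have "(\<Sum>k\<in>{m..<n}. (beta k)^2) < d" using N m
      by (metis (no_types, lifting) abs_of_nonneg max.boundedE real_norm_def sum_nonneg zero_le_power2)
    then have "sqrt (\<Sum>k\<in>{m..<n}. (beta k)^2) < sqrt d" by (rule real_sqrt_less_mono)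
    also have "sqrt d = e / Cst" unfolding d_def using e Cst_pos by simp
    finally show ?thesis using Cst_pos by (simp add: field_simps)
  qed
  then show ?thesis by (intro exI[of _ "max N KK"]) auto
qed

definition "V n x = (\<Sum>k\<in>{KK..<n}. cc k * b k x)"
definition "V1 n x = (\<Sum>k\<in>{KK..<n}. cc k * b1 k x)"

lemma V_diff: "KK \<le> m \<Longrightarrow> m \<le> n \<Longrightarrow> V n x - V m x = (\<Sum>k\<in>{m..<n}. cc k * b k x)"
  unfolding V_def by (rule sum_diff_nat_ivl)

lemma V1_diff: "KK \<le> m \<Longrightarrow> m \<le> n \<Longrightarrow> V1 n x - V1 m x = (\<Sum>k\<in>{m..<n}. cc k * b1 k x)"
  unfolding V1_def by (rule sum_diff_nat_ivl)

lemma V_cauchy: "uniformly_Cauchy_on UNIV V" "uniformly_Cauchy_on UNIV V1"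
proof -
  show "uniformly_Cauchy_on UNIV V"
  proof (rule uniformly_Cauchy_onI')
    fix e :: real assume "e > 0"
    then obtain N where N: "N \<ge> KK" "\<And>m n. m \<ge> N \<Longrightarrow> Cst * sqrt (\<Sum>k\<in>{m..<n}. (beta k)^2) < e"
      using small by blast
    have "dist (V m x) (V n x) < e" if "m \<ge> N" "n > m" for x m n
    proof -
      have "dist (V m x) (V n x) = \<bar>\<Sum>k\<in>{m..<n}. cc k * b k x\<bar>"
        using V_diff[of m n x] that N by (simp add: dist_real_def abs_minus_commute)
      also have "\<dots> \<le> Cst * sqrt (\<Sum>k\<in>{m..<n}. (beta k)^2)"
        by (rule est(1)) (use that N in auto)
      also have "\<dots> < e" using N that by blast
      finally show ?thesis .
    qed
    then show "\<exists>M. \<forall>x\<in>UNIV. \<forall>m\<ge>M. \<forall>n>m. dist (V m x) (V n x) < e" by blast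
  qed
  show "uniformly_Cauchy_on UNIV V1"
  proof (rule uniformly_Cauchy_onI')
    fix e :: real assume "e > 0"
    then obtain N where N: "N \<ge> KK" "\<And>m n. m \<ge> N \<Longrightarrow> Cst * sqrt (\<Sum>k\<in>{m..<n}. (beta k)^2) < e"
      using small by blast
    have "dist (V1 m x) (V1 n x) < e" if "m \<ge> N" "n > m" for x m n
    proof -
      have "dist (V1 m x) (V1 n x) = \<bar>\<Sum>k\<in>{m..<n}. cc k * b1 k x\<bar>"
        using V1_diff[of m n x] that N by (simp add: dist_real_def abs_minus_commute)
      also have "\<dots> \<le> Cst * sqrt (\<Sum>k\<in>{m..<n}. (beta k)^2)"
        by (rule est(2)) (use that N in auto)
      also have "\<dots> < e" using N that by blast
      finally show ?thesis .
    qed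
    then show "\<exists>M. \<forall>x\<in>UNIV. \<forall>m\<ge>M. \<forall>n>m. dist (V1 m x) (V1 n x) < e" by blast
  qed
qed

lemma cV [continuous_intros]: "continuous_on S (V n)"
  unfolding V_def by (intro continuous_intros)

lemma dV: "(V n has_real_derivative V1 n x) (at x)"
  unfolding V_def V1_def by (auto intro!: derivative_eq_intros db simp: mult.commute)

lemma dV1: "(V1 n has_real_derivative
     ((\<Sum>k\<in>{KK..<n}. beta k * b k x) + (g - A x) * V n x) / \<sigma>) (at x)"
proof -
  have "(V1 n has_real_derivative (\<Sum>k\<in>{KK..<n}. cc k * ((lam k - A x) * b k x / \<sigma>))) (at x)"
    unfolding V1_def by (auto intro!: derivative_eq_intros db1 simp: mult.commute)
  then show ?thesis unfolding V_def by (subst (asm) lam_sum) auto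
qed

lemma unif_mult_bounded:
  fixes F :: "nat \<Rightarrow> real \<Rightarrow> real"
  assumes u: "uniform_limit UNIV F f sequentially" and m: "\<And>x. \<bar>mm x\<bar> \<le> B" and B: "B > 0"
  shows "\<forall>e>0. \<exists>N. \<forall>n\<ge>N. \<forall>x. \<bar>mm x * (F n x - f x)\<bar> < e"
proof (intro allI impI)
  fix e :: real assume e: "e > 0"
  then obtain N where N: "\<And>n x. n \<ge> N \<Longrightarrow> dist (F n x) (f x) < e / B"
    using u B unfolding uniform_limit_sequentially_iff by (meson divide_pos_pos UNIV_I)
  have "\<bar>mm x * (F n x - f x)\<bar> < e" if "n \<ge> N" for n x
  proof -
    have "\<bar>mm x * (F n x - f x)\<bar> = \<bar>mm x\<bar> * \<bar>F n x - f x\<bar>" by (simp add: abs_mult)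
    also have "\<dots> \<le> B * \<bar>F n x - f x\<bar>" using m by (intro mult_right_mono) auto
    also have "\<dots> < B * (e / B)" using N[OF that, of x] B
      by (intro mult_strict_left_mono) (auto simp: dist_real_def)
    also have "\<dots> = e" using B by simp
    finally show ?thesis .
  qed
  then show "\<exists>N. \<forall>n\<ge>N. \<forall>x. \<bar>mm x * (F n x - f x)\<bar> < e" by blast
qed

lemma tail_C2: "\<exists>v. uniform_limit UNIV V v sequentially \<and> C2_circle v"
proof -
  obtain v where uv: "uniform_limit UNIV V v sequentially"
    using Cauchy_uniformly_convergent[OF V_cauchy(1)] unfolding uniformly_convergent_on_def by blast
  obtain v1 where uv1: "uniform_limit UNIV V1 v1 sequentially"
    using Cauchy_uniformly_convergent[OF V_cauchy(2)] unfolding uniformly_convergent_on_def by blast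
  have Vt: "(\<lambda>n. V n x) \<longlonglongrightarrow> v x" for x using uv by (rule tendsto_uniform_limitI) simp
  have V1t: "(\<lambda>n. V1 n x) \<longlonglongrightarrow> v1 x" for x using uv1 by (rule tendsto_uniform_limitI) simp
  have cv: "continuous_on UNIV v"
    by (rule uniform_limit_theorem[OF _ uv]) (auto intro!: always_eventually continuous_intros)
  have cV1: "continuous_on UNIV (V1 n)" for n unfolding V1_def by (intro continuous_intros cb1)
  have cv1: "continuous_on UNIV v1"
    by (rule uniform_limit_theorem[OF _ uv1]) (auto intro!: always_eventually cV1)
  have dVh: "(V n has_derivative (\<lambda>h. V1 n x * h)) (at x within UNIV)" for n x
    using dV[of n x] by (simp add: has_field_derivative_def)
  have nle: "\<forall>\<^sub>F n in sequentially. \<forall>x\<in>UNIV. \<forall>h. norm (V1 n x * h - v1 x * h) \<le> e * norm h"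
    if e: "e > 0" for e
  proof -
    obtain N where N: "\<And>n x. n \<ge> N \<Longrightarrow> dist (V1 n x) (v1 x) < e"
      using uv1 e unfolding uniform_limit_sequentially_iff by blast
    have "norm (V1 n x * h - v1 x * h) \<le> e * norm h" if "n \<ge> N" for n x h
    proof -
      have "norm (V1 n x * h - v1 x * h) = \<bar>V1 n x - v1 x\<bar> * \<bar>h\<bar>"
        by (simp add: abs_mult[symmetric] algebra_simps)
      also have "\<dots> \<le> e * \<bar>h\<bar>" using N[OF that, of x]
        by (intro mult_right_mono) (auto simp: dist_real_def)
      finally show ?thesis by simp
    qed
    then show ?thesis unfolding eventually_sequentially by blast
  qed
  have "\<exists>G. \<forall>x\<in>UNIV. (\<lambda>n. V n x) \<longlonglongrightarrow> G x \<and> (G has_derivative (\<lambda>h. v1 x * h)) (at x within UNIV)"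
    by (rule has_derivative_sequence[OF convex_UNIV dVh nle UNIV_I Vt[of 0]])
  then obtain G where G: "\<And>x. (\<lambda>n. V n x) \<longlonglongrightarrow> G x" "\<And>x. (G has_derivative (\<lambda>h. v1 x * h)) (at x)"
    by auto
  have "G = v" using G(1) Vt by (auto intro: LIMSEQ_unique)
  then have dv: "(v has_real_derivative v1 x) (at x)" for x
    using G(2)[of x] by (simp add: has_field_derivative_def)
  have pv: "periodic2pi v" unfolding periodic2pi_def
  proof
    fix x
    have "V n (x + 2*pi) = V n x" for n unfolding V_def using pb by (simp add: periodic2pi_def)
    then show "v (x + 2*pi) = v x" using Vt[of "x + 2*pi"] Vt[of x] by (auto intro: LIMSEQ_unique)
  qed
  define H where "H x = h x - (\<Sum>k<KK. beta k * b k x)" for x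
  define u where "u x = (H x + (g - A x) * v x) / \<sigma>" for x
  define R where "R n x = h x - (\<Sum>k<n. beta k * b k x)" for n x
  have cH: "continuous_on UNIV H" unfolding H_def by (intro continuous_intros)
  have cu: "continuous_on UNIV u" unfolding u_def using sig by (intro continuous_intros cH cv) auto
  have cR: "continuous_on UNIV (R n)" for n unfolding R_def by (intro continuous_intros)
  have pR: "periodic2pi (R n)" for n unfolding R_def using ph pb by (simp add: periodic2pi_def)
  have Rsplit: "(\<Sum>k\<in>{KK..<n}. beta k * b k x) = H x - R n x" if "n \<ge> KK" for n x
  proof -
    have "(\<Sum>k<n. beta k * b k x) = (\<Sum>k<KK. beta k * b k x) + (\<Sum>k\<in>{KK..<n}. beta k * b k x)"
      using sum.atLeastLessThan_concat[of 0 KK n "\<lambda>k. beta k * b k x"] that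
      by (simp add: atLeast0LessThan)
    then show ?thesis unfolding H_def R_def by simp
  qed
  have R2: "(\<lambda>n. integral {0..2*pi} (\<lambda>x. (R n x)^2)) \<longlonglongrightarrow> 0"
    unfolding R_def beta_def using compl[OF ch] .
  have key: "v1 y - v1 a = integral {a..y} u" if y: "y \<in> {a..a+2*pi}" for a y
  proof -
    have ay: "a \<le> y" "y \<le> a + 2*pi" using y by auto
    define I1 where "I1 n = integral {a..y} (R n)" for n
    define I2 where "I2 n = integral {a..y} (\<lambda>t. (g - A t) * (V n t - v t))" for n
    have ci: "continuous_on {a..y} f" if "continuous_on UNIV f" for f :: "real \<Rightarrow> real"
      using that by (rule continuous_on_subset) auto
    have ftc: "V1 n y - V1 n a = integral {a..y} u - I1 n / \<sigma> + I2 n / \<sigma>" if n: "n \<ge> KK" for n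
    proof -
      have "((\<lambda>t. ((\<Sum>k\<in>{KK..<n}. beta k * b k t) + (g - A t) * V n t) / \<sigma>) has_integral (V1 n y - V1 n a)) {a..y}"
        by (rule fundamental_theorem_of_calculus[OF ay(1)])
          (auto simp: has_real_derivative_iff_has_vector_derivative[symmetric]
            intro!: has_field_derivative_at_within dV1)
      moreover have "(\<lambda>t. ((\<Sum>k\<in>{KK..<n}. beta k * b k t) + (g - A t) * V n t) / \<sigma>)
          = (\<lambda>t. u t - R n t / \<sigma> + ((g - A t) * (V n t - v t)) / \<sigma>)"
        by (rule ext, subst Rsplit[OF n]) (use sig in \<open>simp add: u_def field_simps\<close>)
      ultimately have "((\<lambda>t. u t - R n t / \<sigma> + ((g - A t) * (V n t - v t)) / \<sigma>) has_integral (V1 n y - V1 n a)) {a..y}"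
        by simp
      then have "V1 n y - V1 n a = integral {a..y} (\<lambda>t. u t - R n t / \<sigma> + ((g - A t) * (V n t - v t)) / \<sigma>)"
        by (simp add: integral_unique)
      also have "\<dots> = integral {a..y} u - I1 n / \<sigma> + I2 n / \<sigma>"
        unfolding I1_def I2_def
        by (intro integral_unique has_integral_add has_integral_diff has_integral_divide
            integrable_integral contint continuous_intros cu cR cv)
      finally show ?thesis .
    qed
    have I1t: "I1 \<longlonglongrightarrow> 0"
    proof (rule Lim_null_comparison)
      show "\<forall>\<^sub>F n in sequentially. norm (I1 n) \<le> sqrt (2*pi * integral {0..2*pi} (\<lambda>x. (R n x)^2))"
      proof (rule always_eventually, rule allI)
        fix n
        have "norm (I1 n) \<le> integral {a..y} (\<lambda>t. \<bar>R n t\<bar>)" unfolding I1_def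
          by (rule integral_norm_bound_integral) (auto intro!: contint continuous_intros cR)
        also have "\<dots> \<le> integral {a..a+2*pi} (\<lambda>t. \<bar>R n t\<bar>)"
          by (rule integral_subset_le) (use ay in \<open>auto intro!: contint continuous_intros cR\<close>)
        also have "\<dots> = integral {0..2*pi} (\<lambda>t. \<bar>R n t\<bar>)"
          by (rule periodic_integral_shift) (use pR[of n] in \<open>auto intro!: continuous_intros cR simp: periodic2pi_def\<close>)
        also have "\<dots> \<le> sqrt (2*pi * integral {0..2*pi} (\<lambda>x. (R n x)^2))"
          by (rule L1_L2) (rule continuous_on_subset[OF cR], auto)
        finally show "norm (I1 n) \<le> sqrt (2*pi * integral {0..2*pi} (\<lambda>x. (R n x)^2))" .
      qed
      show "(\<lambda>n. sqrt (2*pi * integral {0..2*pi} (\<lambda>x. (R n x)^2))) \<longlonglongrightarrow> 0"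
        using tendsto_real_sqrt[OF tendsto_mult_left[OF R2, of "2*pi"]] by simp
    qed
    have I2t: "I2 \<longlonglongrightarrow> 0"
    proof (rule LIMSEQ_I)
      fix r :: real assume r: "r > 0"
      define e where "e = r / (2*pi + 1)"
      have e: "e > 0" unfolding e_def using r pi_gt_zero by (simp add: add_pos_pos)
      obtain N where N0: "\<forall>n\<ge>N. \<forall>x. \<bar>(g - A x) * (V n x - v x)\<bar> < e"
        using unif_mult_bounded[where mm="\<lambda>x. g - A x", OF uv MM(2) MM(1), rule_format, OF e] by (elim exE)
      have N: "\<bar>(g - A x) * (V n x - v x)\<bar> < e" if "n \<ge> N" for n x using N0 that by simp
      have "norm (I2 n - 0) < r" if "n \<ge> N" for n
      proof -
        have Nle: "\<bar>(g - A t) * (V n t - v t)\<bar> \<le> e" for t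
          using N[OF that, of t] by simp
        have "norm (I2 n) \<le> integral {a..y} (\<lambda>t. e)" unfolding I2_def
          by (rule integral_norm_bound_integral)
            (auto intro!: contint continuous_intros cv simp: Nle)
        also have "\<dots> = (y - a) * e" using ay by simp
        also have "\<dots> \<le> (2*pi) * e" using ay e by (intro mult_right_mono) auto
        also have "\<dots> < r"
        proof -
          have "(2*pi) * e = (2*pi*r) / (2*pi+1)" by (simp add: e_def)
          also have "\<dots> < r"
          proof -
            have hp: "\<not> 1 + pi * 2 < 0" "1 + pi * 2 > 0" using pi_gt_zero by linarith+
            show ?thesis using r hp by (simp add: divide_less_eq algebra_simps)
          qed
          finally show ?thesis .
        qed
        finally show ?thesis by simp
      qed
      then show "\<exists>no. \<forall>n\<ge>no. norm (I2 n - 0) < r" by blast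
    qed
    have "(\<lambda>n. integral {a..y} u - I1 n / \<sigma> + I2 n / \<sigma>) \<longlonglongrightarrow> integral {a..y} u - 0 / \<sigma> + 0 / \<sigma>"
      using sig by (intro tendsto_intros I1t I2t) auto
    then have lim1: "(\<lambda>n. integral {a..y} u - I1 n / \<sigma> + I2 n / \<sigma>) \<longlonglongrightarrow> integral {a..y} u"
      by simp
    have ev: "eventually (\<lambda>n. integral {a..y} u - I1 n / \<sigma> + I2 n / \<sigma> = V1 n y - V1 n a) sequentially"
      unfolding eventually_sequentially using ftc by (metis (no_types, lifting))
    have "(\<lambda>n. V1 n y - V1 n a) \<longlonglongrightarrow> integral {a..y} u"
      using tendsto_cong[OF ev] lim1 by simp
    moreover have "(\<lambda>n. V1 n y - V1 n a) \<longlonglongrightarrow> v1 y - v1 a"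
      by (intro tendsto_intros V1t)
    ultimately show ?thesis by (rule LIMSEQ_unique[rotated])
  qed
  have dv1: "(v1 has_real_derivative u x) (at x)" for x
  proof -
    define a where "a = x - 1"
    have xa: "a < x" "x < a + 2*pi" unfolding a_def using pi_gt3 by auto
    have "((\<lambda>y. integral {a..y} u) has_real_derivative u x) (at x within {a..a+2*pi})"
      by (rule integral_has_real_derivative) (use xa in \<open>auto intro!: continuous_on_subset[OF cu]\<close>)
    then have "((\<lambda>y. integral {a..y} u) has_real_derivative u x) (at x)"
      using xa by (simp add: at_within_Icc_at)
    then have "((\<lambda>y. v1 a + integral {a..y} u) has_real_derivative u x) (at x)"
      by (auto intro!: derivative_eq_intros)
    then show ?thesis
      by (rule has_field_derivative_transform_within_open[where S = "{a<..<a+2*pi}"])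
        (use xa in \<open>auto simp: key[of _ a, symmetric]\<close>)
  qed
  have "C2_circle v" unfolding C2_circle_def using pv dv dv1 cu by blast
  with uv show ?thesis by blast
qed

lemma series_C2:
  "\<exists>T. uniform_limit UNIV (\<lambda>n x. \<Sum>k\<in>{1..n}. beta k / (lam k - g) * b k x) T sequentially
      \<and> C2_circle T"
proof -
  obtain v where uv: "uniform_limit UNIV V v sequentially" and Cv: "C2_circle v"
    using tail_C2 by blast
  define hd where "hd x = (\<Sum>k\<in>{1..<KK}. cc k * b k x)" for x
  have eq: "(\<Sum>k\<in>{1..n}. beta k / (lam k - g) * b k x) = hd x + V (Suc n) x" if n: "n \<ge> KK" for n x
  proof -
    have "(\<Sum>k\<in>{1..n}. beta k / (lam k - g) * b k x) = (\<Sum>k\<in>{1..<Suc n}. cc k * b k x)"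
      by (simp add: cc_def atLeastLessThanSuc_atLeastAtMost)
    also have "\<dots> = hd x + V (Suc n) x"
      unfolding hd_def V_def using KK(1) n
      by (intro sum.atLeastLessThan_concat[symmetric]) auto
    finally show ?thesis .
  qed
  have uvS: "uniform_limit UNIV (\<lambda>n. V (Suc n)) v sequentially"
    using filterlim_compose[OF uv filterlim_Suc] by (simp add: o_def)
  have "uniform_limit UNIV (\<lambda>n x. hd x + V (Suc n) x) (\<lambda>x. hd x + v x) sequentially"
    by (rule uniform_limit_add[OF uniform_limit_const uvS])
  then have ul: "uniform_limit UNIV (\<lambda>n x. \<Sum>k\<in>{1..n}. beta k / (lam k - g) * b k x) (\<lambda>x. hd x + v x) sequentially"
  proof -
    have ev: "eventually (\<lambda>n. \<forall>x\<in>UNIV. hd x + V (Suc n) x = (\<Sum>k\<in>{1..n}. beta k / (lam k - g) * b k x)) sequentially"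
      unfolding eventually_sequentially using eq by metis
    assume "uniform_limit UNIV (\<lambda>n x. hd x + V (Suc n) x) (\<lambda>x. hd x + v x) sequentially"
    then show ?thesis using uniform_limit_cong[OF ev, of "\<lambda>x. hd x + v x" "\<lambda>x. hd x + v x"] by simp
  qed
  obtain v1 v2 where v: "periodic2pi v" "\<And>x. (v has_real_derivative v1 x) (at x)"
      "\<And>x. (v1 has_real_derivative v2 x) (at x)" "continuous_on UNIV v2"
    using Cv unfolding C2_circle_def by blast
  have "C2_circle (\<lambda>x. hd x + v x)"
    unfolding C2_circle_def
  proof (intro conjI exI allI)
    show "periodic2pi (\<lambda>x. hd x + v x)"
      using v(1) pb unfolding hd_def periodic2pi_def by simp
    show "((\<lambda>x. hd x + v x) has_real_derivative (\<Sum>k\<in>{1..<KK}. cc k * b1 k x) + v1 x) (at x)" for x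
      unfolding hd_def by (auto intro!: derivative_eq_intros db v(2) simp: mult.commute)
    show "((\<lambda>x. (\<Sum>k\<in>{1..<KK}. cc k * b1 k x) + v1 x) has_real_derivative
        (\<Sum>k\<in>{1..<KK}. cc k * ((lam k - A x) * b k x / \<sigma>)) + v2 x) (at x)" for x
      by (auto intro!: derivative_eq_intros db1 v(3) simp: mult.commute)
    show "continuous_on UNIV (\<lambda>x. (\<Sum>k\<in>{1..<KK}. cc k * ((lam k - A x) * b k x / \<sigma>)) + v2 x)"
      using sig by (intro continuous_intros v(4)) auto
  qed
  with ul show ?thesis by blast
qed

end

end

lemma C2_add: "C2_circle f \<Longrightarrow> C2_circle g \<Longrightarrow> C2_circle (\<lambda>x. f x + g x)"
proof -
  assume "C2_circle f" "C2_circle g"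
  then obtain f1 f2 g1 g2 where f: "periodic2pi f" "\<And>x. (f has_real_derivative f1 x) (at x)"
      "\<And>x. (f1 has_real_derivative f2 x) (at x)" "continuous_on UNIV f2"
    and g: "periodic2pi g" "\<And>x. (g has_real_derivative g1 x) (at x)"
      "\<And>x. (g1 has_real_derivative g2 x) (at x)" "continuous_on UNIV g2"
    unfolding C2_circle_def by blast
  show ?thesis unfolding C2_circle_def
  proof (intro conjI exI allI)
    show "periodic2pi (\<lambda>x. f x + g x)" using f(1) g(1) by (simp add: periodic2pi_def)
    show "((\<lambda>x. f x + g x) has_real_derivative f1 x + g1 x) (at x)" for x
      by (intro DERIV_add f g)
    show "((\<lambda>x. f1 x + g1 x) has_real_derivative f2 x + g2 x) (at x)" for x
      by (intro DERIV_add f g)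
    show "continuous_on UNIV (\<lambda>x. f2 x + g2 x)" by (intro continuous_intros f g)
  qed
qed

lemma C2_div: "C2_circle f \<Longrightarrow> C2_circle (\<lambda>x. f x / c)"
proof -
  assume "C2_circle f"
  then obtain f1 f2 where f: "periodic2pi f" "\<And>x. (f has_real_derivative f1 x) (at x)"
      "\<And>x. (f1 has_real_derivative f2 x) (at x)" "continuous_on UNIV f2"
    unfolding C2_circle_def by blast
  show ?thesis unfolding C2_circle_def
  proof (intro conjI exI allI)
    show "periodic2pi (\<lambda>x. f x / c)" using f(1) by (simp add: periodic2pi_def)
    show "((\<lambda>x. f x / c) has_real_derivative f1 x / c) (at x)" for x
      by (intro DERIV_cdivide f)
    show "((\<lambda>x. f1 x / c) has_real_derivative f2 x / c) (at x)" for x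
      by (intro DERIV_cdivide f)
    show "continuous_on UNIV (\<lambda>x. f2 x / c)"
      unfolding divide_inverse by (intro continuous_intros f)
  qed
qed

lemma circ_int_cont: "continuous_on UNIV f \<Longrightarrow> circ_int f = integral {0..2*pi} f"
  unfolding circ_int_def
  by (rule set_borel_integral_eq_integral(2), rule borel_integrable_atLeastAtMost',
      rule continuous_on_subset, auto)


theorem proposition5p10:
  fixes \<sigma> \<rho> q \<gamma> :: real
    and A \<eta> :: "real \<Rightarrow> real"
    and b :: "nat \<Rightarrow> real \<Rightarrow> real"
    and lam :: "nat \<Rightarrow> real"
  assumes sigma_pos: "\<sigma> > 0"
    and A_cont: "C0_circle A" and A_pos: "\<forall>x. A x > 0"
    and eta_cont: "C0_circle \<eta>" and eta_pos: "\<forall>x. \<eta> x > 0"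
    and q_nonneg: "q \<ge> 0"
    and gamma: "(0 < \<gamma> \<and> \<gamma> < 1) \<or> 1 < \<gamma>"
    and rho_pos: "\<rho> > 0"
    and b_C2: "\<forall>k. C2_circle (b k)"
    and b_eigen: "\<forall>k x. Lop \<sigma> A (b k) x = lam k * b k x"
    and b_ONB: "ONB_L2_circle b"
    and b0_pos: "\<forall>x. b 0 x > 0"
    and lambda0_max: "\<forall>k\<ge>1. lam k < lam 0"
    and lambda_to_bot: "filterlim lam at_bot sequentially"
    and rho_big: "\<rho> > lam 0 * (1 - \<gamma>)"
  shows "let \<alpha>0 = (\<gamma> / (\<rho> - lam 0 * (1 - \<gamma>)) *
                  circ_int (\<lambda>x. \<eta> x powr ((q + \<gamma> - 1) / \<gamma>) * b 0 x powr ((\<gamma> - 1) / \<gamma>)))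
                 powr (\<gamma> / (1 - \<gamma>));
             \<beta> = (\<lambda>x. \<alpha>0 * b 0 x);
             \<beta>k = (\<lambda>k. circ_int (\<lambda>x. b k x * \<beta> x powr (- 1 / \<gamma>) * \<eta> x powr ((q + \<gamma> - 1) / \<gamma>)));
             g = (lam 0 - \<rho>) / \<gamma>
         in \<exists>S. uniform_limit UNIV
                  (\<lambda>n x. b 0 x / \<alpha>0 + (\<Sum>k\<in>{1..n}. \<beta>k k / (lam k - g) * b k x)) S sequentially
                \<and> C2_circle S"
proof -
  define \<alpha>0 where "\<alpha>0 = (\<gamma> / (\<rho> - lam 0 * (1 - \<gamma>)) *
                  circ_int (\<lambda>x. \<eta> x powr ((q + \<gamma> - 1) / \<gamma>) * b 0 x powr ((\<gamma> - 1) / \<gamma>)))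
                 powr (\<gamma> / (1 - \<gamma>))"
  define g where "g = (lam 0 - \<rho>) / \<gamma>"
  define h where "h x = (\<alpha>0 * b 0 x) powr (- 1 / \<gamma>) * \<eta> x powr ((q + \<gamma> - 1) / \<gamma>)" for x
  have cA: "continuous_on UNIV A" and pA: "periodic2pi A" using A_cont by (auto simp: C0_circle_def)
  have ceta: "continuous_on UNIV \<eta>" and peta: "periodic2pi \<eta>" using eta_cont by (auto simp: C0_circle_def)
  let ?P = "\<lambda>k f' f''. (\<forall>x. (b k has_real_derivative f' x) (at x)) \<and>
      (\<forall>x. (f' has_real_derivative f'' x) (at x)) \<and> continuous_on UNIV f''"
  have pb: "periodic2pi (b k)" for k using b_C2 by (auto simp: C2_circle_def)
  have "\<forall>k. \<exists>f'. \<exists>f''. ?P k f' f''" using b_C2 unfolding C2_circle_def by blast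
  then have "\<exists>B1. \<forall>k. \<exists>f''. ?P k (B1 k) f''" by (rule choice)
  then obtain B1 where "\<forall>k. \<exists>f''. ?P k (B1 k) f''" ..
  then have "\<exists>B2. \<forall>k. ?P k (B1 k) (B2 k)" by (rule choice)
  then obtain B2 where B: "\<And>k. ?P k (B1 k) (B2 k)" by blast
  have db: "(b k has_real_derivative B1 k x) (at x)" for k x using B by blast
  have dB1: "(B1 k has_real_derivative B2 k x) (at x)" for k x using B by blast
  have der1: "deriv (b k) = B1 k" for k by (rule ext, rule DERIV_imp_deriv, rule db)
  have der2: "deriv (B1 k) x = B2 k x" for k x by (rule DERIV_imp_deriv, rule dB1)
  have B2eq: "B2 k x = (lam k - A x) * b k x / \<sigma>" for k x
    using b_eigen[rule_format, of k x] sigma_pos unfolding Lop_def der1 der2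
    by (simp add: field_simps)
  have db1: "(B1 k has_real_derivative (lam k - A x) * b k x / \<sigma>) (at x)" for k x
    using dB1[of k x] unfolding B2eq .
  have cb: "continuous_on UNIV (b k)" for k using db
    by (metis DERIV_isCont continuous_at_imp_continuous_on)
  have orth: "integral {0..2*pi} (\<lambda>x. b j x * b k x) = (if j = k then 1 else 0)" for j k
  proof -
    have "circ_int (\<lambda>x. b j x * b k x) = (if j = k then 1 else 0)"
      using b_ONB unfolding ONB_L2_circle_def by blast
    moreover have "circ_int (\<lambda>x. b j x * b k x) = integral {0..2*pi} (\<lambda>x. b j x * b k x)"
      by (intro circ_int_cont continuous_intros cb)
    ultimately show ?thesis by simp
  qed
  have compl: "(\<lambda>n. integral {0..2*pi} (\<lambda>x. (f x - (\<Sum>k<n. integral {0..2*pi} (\<lambda>y. f y * b k y) * b k x))^2))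
          \<longlonglongrightarrow> 0" if cf: "continuous_on UNIV f" for f
  proof -
    have L2: "L2_circle f" unfolding L2_circle_def
    proof
      show "f \<in> borel_measurable lborel" using borel_measurable_continuous_onI[OF cf] by simp
      show "set_integrable lborel {0..2*pi} (\<lambda>x. (f x)^2)"
        by (rule borel_integrable_atLeastAtMost') (intro continuous_intros continuous_on_subset[OF cf], auto)
    qed
    have ip: "circ_int (\<lambda>y. f y * b k y) = integral {0..2*pi} (\<lambda>y. f y * b k y)" for k
      by (intro circ_int_cont continuous_intros cb cf)
    have "circ_int (\<lambda>x. (f x - (\<Sum>k<n. circ_int (\<lambda>y. f y * b k y) * b k x))^2)
       = integral {0..2*pi} (\<lambda>x. (f x - (\<Sum>k<n. integral {0..2*pi} (\<lambda>y. f y * b k y) * b k x))^2)" for n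
      unfolding ip by (intro circ_int_cont continuous_intros cb cf)
    moreover have "(\<lambda>n. circ_int (\<lambda>x. (f x - (\<Sum>k<n. circ_int (\<lambda>y. f y * b k y) * b k x))^2)) \<longlonglongrightarrow> 0"
      using b_ONB L2 unfolding ONB_L2_circle_def by blast
    ultimately show ?thesis by simp
  qed
  interpret eig \<sigma> A b B1 lam
    by unfold_locales (use sigma_pos cA pA pb db db1 orth compl lambda_to_bot in auto)
  have a0: "\<alpha>0 \<ge> 0" unfolding \<alpha>0_def by simp
  have ch: "continuous_on UNIV h"
  proof (cases "\<alpha>0 = 0")
    case True then show ?thesis unfolding h_def by simp
  next
    case False
    with a0 have "\<alpha>0 > 0" by simp
    then have pos: "\<alpha>0 * b 0 x \<noteq> 0" for x using b0_pos by (metis mult_pos_pos less_irrefl)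
    have ne: "\<eta> x \<noteq> 0" for x using eta_pos by (metis less_irrefl)
    have c1: "continuous_on UNIV (\<lambda>x. (\<alpha>0 * b 0 x) powr (- 1 / \<gamma>))"
      by (rule continuous_on_powr[OF continuous_on_mult[OF continuous_on_const cb] continuous_on_const])
        (use pos in blast)
    have c2: "continuous_on UNIV (\<lambda>x. \<eta> x powr ((q + \<gamma> - 1) / \<gamma>))"
      by (rule continuous_on_powr[OF ceta continuous_on_const]) (use ne in blast)
    show ?thesis unfolding h_def by (rule continuous_on_mult[OF c1 c2])
  qed
  have ph: "periodic2pi h" using pb[of 0] peta unfolding h_def periodic2pi_def by simp
  obtain T where T: "uniform_limit UNIV (\<lambda>n x. \<Sum>k\<in>{1..n}. beta h k / (lam k - g) * b k x) T sequentially"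
      "C2_circle T"
    using series_C2[OF ch ph, of g] by blast
  have bk: "beta h k = circ_int (\<lambda>x. b k x * (\<alpha>0 * b 0 x) powr (- 1 / \<gamma>) * \<eta> x powr ((q + \<gamma> - 1) / \<gamma>))" for k
  proof -
    have "(\<lambda>x. b k x * (\<alpha>0 * b 0 x) powr (- 1 / \<gamma>) * \<eta> x powr ((q + \<gamma> - 1) / \<gamma>))
        = (\<lambda>x. h x * b k x)" unfolding h_def by (rule ext) (simp only: mult.commute mult.left_commute)
    then have "circ_int (\<lambda>x. b k x * (\<alpha>0 * b 0 x) powr (- 1 / \<gamma>) * \<eta> x powr ((q + \<gamma> - 1) / \<gamma>))
        = circ_int (\<lambda>x. h x * b k x)" by simp
    also have "\<dots> = integral {0..2*pi} (\<lambda>x. h x * b k x)"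
      by (rule circ_int_cont, rule continuous_on_mult[OF ch cb])
    also have "\<dots> = beta h k" by (rule beta_eq[OF ch ph, symmetric])
    finally show ?thesis by simp
  qed
  have main: "\<exists>S. uniform_limit UNIV
      (\<lambda>n x. b 0 x / \<alpha>0 + (\<Sum>k\<in>{1..n}. circ_int (\<lambda>x. b k x * (\<alpha>0 * b 0 x) powr (- 1 / \<gamma>) * \<eta> x powr ((q + \<gamma> - 1) / \<gamma>)) / (lam k - g) * b k x)) S sequentially
      \<and> C2_circle S"
  proof (intro exI conjI)
    show "uniform_limit UNIV
      (\<lambda>n x. b 0 x / \<alpha>0 + (\<Sum>k\<in>{1..n}. circ_int (\<lambda>x. b k x * (\<alpha>0 * b 0 x) powr (- 1 / \<gamma>) * \<eta> x powr ((q + \<gamma> - 1) / \<gamma>)) / (lam k - g) * b k x))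
      (\<lambda>x. b 0 x / \<alpha>0 + T x) sequentially"
      unfolding bk[symmetric] by (rule uniform_limit_add[OF uniform_limit_const T(1)])
    show "C2_circle (\<lambda>x. b 0 x / \<alpha>0 + T x)"
      using b_C2 T(2) by (intro C2_add C2_div) auto
  qed
  show ?thesis unfolding Let_def using main unfolding \<alpha>0_def g_def .
qed

end
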